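(* Let $\Gamma\subset\mathbf{Z}^n$ be an almost periodic pattern. Then the function $\rho_\Gamma:\mathbf{Z}^n\to\mathbf{R}$ is Bohr almost periodic, i.e. for every $\varepsilon>0$ the set $\{v\in\mathbf{Z}^n : \sup_{u\in\mathbf{Z}^n}|\rho_\Gamma(u)-\rho_\Gamma(u+v)|<\varepsilon\}$ is relatively dense.
   Context: Balls are for the sup norm: $B(x,R)=\{y:\max_i|x_i-y_i|<R\}$, $B_R=B(0,R)$, $[B]=B\cap\mathbf{Z}^n$. Relatively dense: there is $R_0>0$ such that every ball of radius at least $R_0$ meets the set; uniformly discrete: there is $r>0$ such that every ball of radius at most $r$ contains at most one point; Delone: both. $D_R^+(\Gamma)=\sup_{x\in\mathbf{R}^n}\frac{\operatorname{Card}(B(x,R)\cap\Gamma)}{\operatorname{Card}(B(x,R)\cap\mathbf{Z}^n)}$. A Delone set $\Gamma\subset\mathbf{Z}^n$ is an almost periodic pattern if for every $\varepsilon>0$ there exist $R_\varepsilon>0$ and a relatively dense set $\mathcal N_\varepsilon$ with $D_R^+((\Gamma+v)\Delta\Gamma)<\varepsilon$ for all $R\ge R_\varepsilon$, $v\in\mathcal N_\varepsilon$. The density of a set $A\subset\mathbf{Z}^n$ is $D(A)=\lim_{R\to\infty}\operatorname{Card}(A\cap[B_R])/\operatorname{Card}[B_R]$ (the paper uses that these densities exist for the sets considered). For $v\in\mathbf{Z}^n$, $\rho_\Gamma(v)=\frac{D(\Gamma\cap(\Gamma-v))}{D(\Gamma)}\in[0,1]$. *)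

theory Defs
  imports "HOL-Analysis.Analysis"
begin

text \<open>Z^n is modelled as int^'n, R^n as real^'n, for an arbitrary finite index type 'n.\<close>

definition lat_emb :: "int^'n \<Rightarrow> real^'n" where
  "lat_emb v = (\<chi> i. real_of_int (v $ i))"

definition sball :: "real^'n \<Rightarrow> real \<Rightarrow> (real^'n) set" where
  "sball x R = {y. Max (range (\<lambda>i. \<bar>x $ i - y $ i\<bar>)) < R}"

definition lat_ball :: "real^'n \<Rightarrow> real \<Rightarrow> (int^'n) set" where
  "lat_ball x R = {v. lat_emb v \<in> sball x R}"

definition rel_dense :: "(int^'n) set \<Rightarrow> bool" where
  "rel_dense A \<longleftrightarrow> (\<exists>R0>0. \<forall>(x::real^'n) R. R \<ge> R0 \<longrightarrow> lat_ball x R \<inter> A \<noteq> {})"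

definition unif_discrete :: "(int^'n) set \<Rightarrow> bool" where
  "unif_discrete A \<longleftrightarrow> (\<exists>r>0. \<forall>(x::real^'n) R. R \<le> r \<longrightarrow> card (lat_ball x R \<inter> A) \<le> 1)"

definition delone :: "(int^'n) set \<Rightarrow> bool" where
  "delone A \<longleftrightarrow> rel_dense A \<and> unif_discrete A"

definition upper_density :: "real \<Rightarrow> (int^'n) set \<Rightarrow> real" where
  "upper_density R A =
     (SUP x::real^'n. real (card (lat_ball x R \<inter> A)) / real (card (lat_ball x R)))"

definition translate :: "(int^'n) set \<Rightarrow> int^'n \<Rightarrow> (int^'n) set" where
  "translate A v = (\<lambda>x. x + v) ` A"

definition almost_periodic_pattern :: "(int^'n) set \<Rightarrow> bool" where
  "almost_periodic_pattern \<Gamma> \<longleftrightarrow> delone \<Gamma> \<and>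
     (\<forall>\<epsilon>>0. \<exists>R\<epsilon>>0. \<exists>N. rel_dense N \<and>
        (\<forall>R\<ge>R\<epsilon>. \<forall>v\<in>N.
           upper_density R ((translate \<Gamma> v - \<Gamma>) \<union> (\<Gamma> - translate \<Gamma> v)) < \<epsilon>))"

definition density :: "(int^'n) set \<Rightarrow> real" where
  "density A = Lim at_top (\<lambda>R::real.
      real (card (A \<inter> lat_ball 0 R)) / real (card (lat_ball (0::real^'n) R)))"

definition rho :: "(int^'n) set \<Rightarrow> int^'n \<Rightarrow> real" where
  "rho \<Gamma> v = density (\<Gamma> \<inter> translate \<Gamma> (- v)) / density \<Gamma>"

end

theory Submission
  imports Defs "HOL-Real_Asymp.Real_Asymp"
begin


definition cube :: "int^'n \<Rightarrow> nat \<Rightarrow> (int^'n) set" where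
  "cube c m = {x. \<forall>i. \<bar>x$i - c$i\<bar> \<le> int m}"

lemma cube_eq_image:
  "cube c m = vec_lambda ` (PiE UNIV (\<lambda>i. {c$i - int m .. c$i + int m}))"
proof
  show "cube c m \<subseteq> vec_lambda ` (PiE UNIV (\<lambda>i. {c$i - int m .. c$i + int m}))"
  proof
    fix x assume "x \<in> cube c m"
    then have "\<forall>i. c$i - int m \<le> x$i \<and> x$i \<le> c$i + int m"
      unfolding cube_def abs_le_iff by (simp add: algebra_simps)
    then have "(\<lambda>i. x$i) \<in> PiE UNIV (\<lambda>i. {c$i - int m .. c$i + int m})"
      by (simp add: PiE_def)
    moreover have "x = vec_lambda (\<lambda>i. x$i)" by simp
    ultimately show "x \<in> vec_lambda ` (PiE UNIV (\<lambda>i. {c$i - int m .. c$i + int m}))" by blast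
  qed
  show "vec_lambda ` (PiE UNIV (\<lambda>i. {c$i - int m .. c$i + int m})) \<subseteq> cube c m"
  proof
    fix y assume "y \<in> vec_lambda ` (PiE UNIV (\<lambda>i. {c$i - int m .. c$i + int m}))"
    then obtain f where f: "f \<in> PiE UNIV (\<lambda>i. {c$i - int m .. c$i + int m})" "y = vec_lambda f"
      by blast
    have "\<forall>i. f i \<in> {c$i - int m .. c$i + int m}" using f(1) by (auto simp: PiE_def)
    have "\<bar>f i - c$i\<bar> \<le> int m" for i
    proof -
      have "c$i - int m \<le> f i" "f i \<le> c$i + int m" using \<open>\<forall>i. _\<close> by auto
      then show ?thesis by linarith
    qed
    then show "y \<in> cube c m" using f(2) by (auto simp: cube_def)
  qed
qed

lemma finite_cube[simp]: "finite (cube c m)"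
  unfolding cube_eq_image by (intro finite_imageI finite_PiE) auto

lemma card_cube: "card (cube (c::int^'n) m) = (2*m+1)^CARD('n)"
proof -
  have "inj_on vec_lambda (PiE UNIV (\<lambda>i::'n. {c$i - int m .. c$i + int m}))"
    by (auto simp: inj_on_def vec_lambda_inject)
  then have "card (cube c m) = card (PiE UNIV (\<lambda>i::'n. {c$i - int m .. c$i + int m}))"
    unfolding cube_eq_image by (rule card_image)
  also have "\<dots> = (\<Prod>i\<in>(UNIV::'n set). card {c$i - int m .. c$i + int m})"
    by (rule card_PiE) simp
  also have "\<dots> = (\<Prod>i\<in>(UNIV::'n set). 2*m+1)"
    by (intro prod.cong) (auto simp: nat_add_distrib)
  also have "\<dots> = (2*m+1)^CARD('n)" by simp
  finally show ?thesis .
qed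

lemma card_cube_pos: "0 < card (cube (c::int^'n) m)"
  by (simp add: card_cube)

lemma sball_iff: "y \<in> sball x R \<longleftrightarrow> (\<forall>i. \<bar>x$i - y$i\<bar> < R)"
proof -
  have "finite (range (\<lambda>i. \<bar>x $ i - y $ i\<bar>))" by simp
  moreover have "range (\<lambda>i. \<bar>x $ i - y $ i\<bar>) \<noteq> {}" by simp
  ultimately show ?thesis unfolding sball_def by (auto simp: Max_less_iff)
qed

lemma lat_ball_iff: "v \<in> lat_ball x R \<longleftrightarrow> (\<forall>i. \<bar>x$i - real_of_int (v$i)\<bar> < R)"
  by (simp add: lat_ball_def sball_iff lat_emb_def)

lemma lat_ball_cube: "lat_ball (lat_emb c) (real m + 1) = cube c m"
proof -
  have h: "\<bar>real_of_int (a::int) - real_of_int b\<bar> < real m + 1 \<longleftrightarrow> \<bar>b - a\<bar> \<le> int m" for a b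
  proof -
    have "\<bar>real_of_int a - real_of_int b\<bar> = real_of_int \<bar>b - a\<bar>" by simp
    then show ?thesis by linarith
  qed
  show ?thesis
    by (intro set_eqI) (simp add: lat_ball_iff cube_def lat_emb_def h)
qed

lemma lat_ball0_cube:
  assumes "R > 0"
  shows "lat_ball 0 R = cube 0 (nat (\<lceil>R\<rceil> - 1))"
proof -
  have "\<bar>real_of_int a\<bar> < R \<longleftrightarrow> \<bar>a\<bar> \<le> int (nat (\<lceil>R\<rceil> - 1))" for a :: int
  proof -
    have "int (nat (\<lceil>R\<rceil> - 1)) = \<lceil>R\<rceil> - 1" using assms by simp
    moreover have "\<bar>real_of_int a\<bar> < R \<longleftrightarrow> \<bar>a\<bar> < \<lceil>R\<rceil>"
      by (metis ceiling_less_iff less_ceiling_iff of_int_abs)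
    ultimately show ?thesis by linarith
  qed
  then show ?thesis
    by (intro set_eqI) (simp add: lat_ball_iff cube_def)
qed

lemma finite_lat_ball: "finite (lat_ball (x::real^'n) R)"
proof -
  obtain m :: nat where m: "R \<le> real m" using real_arch_simple by blast
  define c :: "int^'n" where "c = (\<chi> i. \<lfloor>x$i\<rfloor>)"
  have "lat_ball x R \<subseteq> cube c (m+1)"
  proof
    fix v assume "v \<in> lat_ball x R"
    then have "\<forall>i. \<bar>x$i - real_of_int (v$i)\<bar> < R" by (simp add: lat_ball_iff)
    have "\<bar>v$i - c$i\<bar> \<le> int (m+1)" for i
    proof -
      have "\<bar>x$i - real_of_int (v$i)\<bar> < real m" using \<open>\<forall>i. _\<close> m by (auto intro: less_le_trans)
      moreover have "real_of_int \<lfloor>x$i\<rfloor> \<le> x$i" "x$i < real_of_int \<lfloor>x$i\<rfloor> + 1"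
        by (rule of_int_floor_le, rule real_of_int_floor_add_one_gt)
      ultimately have "real_of_int (v$i) - real_of_int \<lfloor>x$i\<rfloor> < real m + 1"
          "real_of_int \<lfloor>x$i\<rfloor> - real_of_int (v$i) < real m + 1"
        unfolding abs_less_iff by linarith+
      then have "v$i - \<lfloor>x$i\<rfloor> < int m + 1" "\<lfloor>x$i\<rfloor> - v$i < int m + 1" by linarith+
      then show ?thesis unfolding c_def by simp
    qed
    then show "v \<in> cube c (m+1)" unfolding cube_def by simp
  qed
  then show ?thesis by (rule finite_subset) simp
qed



definition cnt :: "(int^'n) set \<Rightarrow> int^'n \<Rightarrow> nat \<Rightarrow> nat" where
  "cnt A c m = card (A \<inter> cube c m)"

definition sdf :: "(int^'n) set \<Rightarrow> int^'n \<Rightarrow> (int^'n) set" where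
  "sdf A v = (translate A v - A) \<union> (A - translate A v)"

lemma cube_mono: "m \<le> m' \<Longrightarrow> cube c m \<subseteq> cube c m'"
proof
  fix x assume mm: "m \<le> m'" and "x \<in> cube c m"
  then have "\<bar>x$i - c$i\<bar> \<le> int m" for i by (simp add: cube_def)
  moreover have "int m \<le> int m'" using mm by simp
  ultimately have "\<bar>x$i - c$i\<bar> \<le> int m'" for i using order_trans by blast
  then show "x \<in> cube c m'" by (simp add: cube_def)
qed

lemma abs_tri3: "\<bar>x - c\<bar> \<le> a \<Longrightarrow> \<bar>c - v\<bar> \<le> b \<Longrightarrow> \<bar>x - v\<bar> \<le> (a + b::int)"
  by arith

lemma cube_shift1:
  assumes "\<forall>i. \<bar>c$i - v$i\<bar> \<le> int L"
  shows "cube c m \<subseteq> cube v (m+L)"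
proof
  fix x assume "x \<in> cube c m"
  then have "\<bar>x$i - c$i\<bar> \<le> int m" for i by (simp add: cube_def)
  then have "\<bar>x$i - v$i\<bar> \<le> int (m+L)" for i
    using assms[rule_format, of i] abs_tri3 by (metis of_nat_add)
  then show "x \<in> cube v (m+L)" by (simp add: cube_def)
qed

lemma cube_shift2:
  assumes "\<forall>i. \<bar>c$i - v$i\<bar> \<le> int L" "L \<le> m"
  shows "cube v (m-L) \<subseteq> cube c m"
proof
  fix x assume "x \<in> cube v (m-L)"
  then have "\<bar>x$i - v$i\<bar> \<le> int (m-L)" for i by (simp add: cube_def)
  moreover have "\<bar>v$i - c$i\<bar> \<le> int L" for i using assms(1)[rule_format, of i] by (simp add: abs_minus_commute)
  ultimately have "\<bar>x$i - c$i\<bar> \<le> int (m-L) + int L" for i using abs_tri3 by blast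
  moreover have "int (m-L) + int L = int m" using assms(2) by simp
  ultimately show "x \<in> cube c m" by (simp add: cube_def)
qed

lemma cnt_le_card: "cnt A c m \<le> card (cube c m)"
  unfolding cnt_def by (rule card_mono) auto

lemma cnt_mono: "m \<le> m' \<Longrightarrow> cnt A c m \<le> cnt A c m'"
  unfolding cnt_def by (rule card_mono) (use cube_mono in auto)

lemma nat_real_aux: "(x'::nat) \<le> x + (a' - a) \<Longrightarrow> a \<le> a' \<Longrightarrow> real x' \<le> real x + real a' - real a"
proof -
  assume 1: "x' \<le> x + (a' - a)" and 2: "a \<le> a'"
  have "real x' \<le> real (x + (a' - a))" using 1 by (simp only: of_nat_le_iff)
  also have "\<dots> = real x + real a' - real a" using 2 by (simp add: of_nat_diff)
  finally show ?thesis .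
qed

lemma cnt_growth:
  fixes c :: "int^'n"
  assumes "m \<le> m'"
  shows "real (cnt A c m') \<le> real (cnt A c m) + real ((2*m'+1)^CARD('n)) - real ((2*m+1)^CARD('n))"
proof -
  have sub: "cube c m \<subseteq> cube c m'" using cube_mono[OF assms] .
  have "A \<inter> cube c m' \<subseteq> (A \<inter> cube c m) \<union> (cube c m' - cube c m)" by auto
  then have "card (A \<inter> cube c m') \<le> card ((A \<inter> cube c m) \<union> (cube c m' - cube c m))"
    by (rule card_mono[rotated]) auto
  also have "\<dots> \<le> card (A \<inter> cube c m) + card (cube c m' - cube c m)" by (rule card_Un_le)
  also have "card (cube c m' - cube c m) = card (cube c m') - card (cube c m)"
    using sub by (simp add: card_Diff_subset)
  finally have "card (A \<inter> cube c m') \<le> card (A \<inter> cube c m) + (card (cube c m') - card (cube c m))" .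
  moreover have "card (cube c m) \<le> card (cube c m')" using sub by (simp add: card_mono)
  ultimately have "real (card (A \<inter> cube c m')) \<le> real (card (A \<inter> cube c m)) + real (card (cube c m')) - real (card (cube c m))"
    by (rule nat_real_aux)
  then show ?thesis unfolding cnt_def card_cube .
qed

lemma translate_cube: "(\<lambda>x. x + v) ` cube c m = cube (c + v) m"
proof
  show "(\<lambda>x. x + v) ` cube c m \<subseteq> cube (c + v) m" by (auto simp: cube_def)
  show "cube (c + v) m \<subseteq> (\<lambda>x. x + v) ` cube c m"
  proof
    fix y assume "y \<in> cube (c+v) m"
    then have "y - v \<in> cube c m" by (simp add: cube_def algebra_simps)
    moreover have "y = (y - v) + v" by simp
    ultimately show "y \<in> (\<lambda>x. x + v) ` cube c m" by (intro image_eqI[of _ _ "y - v"]) simp_all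
  qed
qed

lemma card_translate_int:
  "card (translate A v \<inter> cube (c + v) m) = card (A \<inter> cube c m)"
proof -
  have "translate A v \<inter> cube (c + v) m = (\<lambda>x. x + v) ` (A \<inter> cube c m)"
    unfolding translate_def translate_cube[symmetric] by (auto simp: inj_on_def)
  moreover have "inj_on (\<lambda>x. x + v) (A \<inter> cube c m)" by (simp add: inj_on_def)
  ultimately show ?thesis by (simp add: card_image)
qed

lemma card_int_translate:
  "card (cube c m \<inter> translate S u) = card (cube (c - u) m \<inter> S)"
proof -
  have "card (translate S u \<inter> cube ((c - u) + u) m) = card (S \<inter> cube (c - u) m)"
    by (rule card_translate_int)
  then show ?thesis by (simp add: Int_commute)
qed

lemma card_symdiff_le:
  assumes "finite Q"
  shows "card (X \<inter> Q) \<le> card (Y \<inter> Q) + card (Q \<inter> ((Y - X) \<union> (X - Y)))"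
proof -
  have "X \<inter> Q \<subseteq> (Y \<inter> Q) \<union> (Q \<inter> ((Y - X) \<union> (X - Y)))" by auto
  then have "card (X \<inter> Q) \<le> card ((Y \<inter> Q) \<union> (Q \<inter> ((Y - X) \<union> (X - Y))))"
    using assms by (intro card_mono) auto
  also have "\<dots> \<le> card (Y \<inter> Q) + card (Q \<inter> ((Y - X) \<union> (X - Y)))" by (rule card_Un_le)
  finally show ?thesis .
qed

lemma cnt_shift:
  "\<bar>real (cnt A (c + v) m) - real (cnt A c m)\<bar> \<le> real (card (cube (c + v) m \<inter> sdf A v))"
proof -
  have e: "cnt A c m = card (translate A v \<inter> cube (c + v) m)"
    unfolding cnt_def by (simp add: card_translate_int)
  have 1: "card (A \<inter> cube (c+v) m) \<le> card (translate A v \<inter> cube (c+v) m) + card (cube (c + v) m \<inter> sdf A v)"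
    using card_symdiff_le[of "cube (c+v) m" A "translate A v"] unfolding sdf_def by simp
  have 2: "card (translate A v \<inter> cube (c+v) m) \<le> card (A \<inter> cube (c+v) m) + card (cube (c + v) m \<inter> sdf A v)"
    using card_symdiff_le[of "cube (c+v) m" "translate A v" A] unfolding sdf_def by (simp add: Un_commute)
  have a1: "real (card (A \<inter> cube (c+v) m)) \<le> real (card (translate A v \<inter> cube (c+v) m)) + real (card (cube (c + v) m \<inter> sdf A v))"
    using 1 by (metis of_nat_add of_nat_le_iff)
  have a2: "real (card (translate A v \<inter> cube (c+v) m)) \<le> real (card (A \<inter> cube (c+v) m)) + real (card (cube (c + v) m \<inter> sdf A v))"
    using 2 by (metis of_nat_add of_nat_le_iff)
  show ?thesis unfolding e unfolding cnt_def using a1 a2 by linarith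
qed



definition almost_per :: "(int^'n) set \<Rightarrow> bool" where
  "almost_per A \<longleftrightarrow> (\<forall>e>0. \<exists>M L N. (\<forall>c::int^'n. \<exists>v\<in>N. \<forall>i. \<bar>c$i - v$i\<bar> \<le> int L) \<and>
     (\<forall>v\<in>N. \<forall>m\<ge>M. \<forall>c::int^'n. real (card (cube c m \<inter> sdf A v)) \<le> e * real ((2*m+1)^CARD('n))))"

lemma lim_ratio1: "(\<lambda>m::nat. (real(2*(m+L)+1)/real(2*m+1))^k) \<longlonglongrightarrow> 1"
proof -
  have "(\<lambda>m::nat. real(2*(m+L)+1)/real(2*m+1)) \<longlonglongrightarrow> 1" by real_asymp
  then have "(\<lambda>m::nat. (real(2*(m+L)+1)/real(2*m+1))^k) \<longlonglongrightarrow> 1^k" by (rule tendsto_power)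
  then show ?thesis by simp
qed

lemma lim_ratio2: "(\<lambda>m::nat. ((2*real m - 2*real L + 1)/real(2*m+1))^k) \<longlonglongrightarrow> 1"
proof -
  have "(\<lambda>m::nat. (2*real m - 2*real L + 1)/real(2*m+1)) \<longlonglongrightarrow> 1" by real_asymp
  then have "(\<lambda>m::nat. ((2*real m - 2*real L + 1)/real(2*m+1))^k) \<longlonglongrightarrow> 1^k" by (rule tendsto_power)
  then show ?thesis by simp
qed

lemma cnt_cube_sub:
  assumes "cube c m \<subseteq> cube c' m'"
  shows "cnt A c m \<le> cnt A c' m'"
  unfolding cnt_def by (rule card_mono) (use assms in auto)

lemma uniform:
  fixes A :: "(int^'n) set"
  assumes ap: "almost_per A" and e: "e > 0"
  shows "\<exists>M. \<forall>m\<ge>M. \<forall>c::int^'n. \<bar>real (cnt A c m) - real (cnt A 0 m)\<bar> \<le> e * real ((2*m+1)^CARD('n))"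
proof -
  define e1 where "e1 = min (e/3) 1"
  have e1: "e1 > 0" "e1 \<le> 1" "3*e1 \<le> e" using e by (auto simp: e1_def)
  obtain M L N where hN: "\<forall>c::int^'n. \<exists>v\<in>N. \<forall>i. \<bar>c$i - v$i\<bar> \<le> int L"
    and hB: "\<forall>v\<in>N. \<forall>m\<ge>M. \<forall>c::int^'n. real (card (cube c m \<inter> sdf A v)) \<le> e1 * real ((2*m+1)^CARD('n))"
    using ap e1(1) unfolding almost_per_def by blast
  define k where "k = CARD('n)"
  have ev1: "eventually (\<lambda>m. (real(2*(m+L)+1)/real(2*m+1))^k < 1 + e1) sequentially"
    by (rule order_tendstoD(2)[OF lim_ratio1]) (use e1 in simp)
  have ev2: "eventually (\<lambda>m. ((2*real m - 2*real L + 1)/real(2*m+1))^k > 1 - e1) sequentially"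
    by (rule order_tendstoD(1)[OF lim_ratio2]) (use e1 in simp)
  obtain M1 where M1: "\<forall>m\<ge>M1. (real(2*(m+L)+1)/real(2*m+1))^k < 1 + e1 \<and>
      ((2*real m - 2*real L + 1)/real(2*m+1))^k > 1 - e1"
    using eventually_conj[OF ev1 ev2] unfolding eventually_sequentially by blast
  have main: "\<bar>real (cnt A c m) - real (cnt A 0 m)\<bar> \<le> e * real ((2*m+1)^CARD('n))"
    if m: "m \<ge> max M1 (M + L)" for m and c :: "int^'n"
  proof -
    obtain v where v: "v \<in> N" "\<forall>i. \<bar>c$i - v$i\<bar> \<le> int L" using hN by blast
    have mL: "L \<le> m" "M \<le> m - L" "M \<le> m + L" "m \<ge> M1" using m by auto
    define s where "s = real ((2*m+1)^k)"
    define S where "S = real ((2*(m+L)+1)^k)"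
    define T where "T = real ((2*(m-L)+1)^k)"
    have spos: "s > 0" unfolding s_def by simp
    have u1: "real (cnt A c m) \<le> real (cnt A v (m+L))"
      using cnt_cube_sub[OF cube_shift1[OF v(2)]] by simp
    have u2: "\<bar>real (cnt A v (m+L)) - real (cnt A 0 (m+L))\<bar> \<le> e1 * S"
    proof -
      have "real (card (cube v (m+L) \<inter> sdf A v)) \<le> e1 * S"
        unfolding S_def k_def by (rule hB[rule_format, OF v(1) mL(3)])
      moreover have "\<bar>real (cnt A v (m+L)) - real (cnt A 0 (m+L))\<bar> \<le> real (card (cube v (m+L) \<inter> sdf A v))"
        using cnt_shift[of A 0 v "m+L"] by simp
      ultimately show ?thesis by linarith
    qed
    have u3: "real (cnt A 0 (m+L)) \<le> real (cnt A 0 m) + S - s"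
      using cnt_growth[of m "m+L" A 0] unfolding S_def s_def k_def by simp
    have l1: "real (cnt A v (m-L)) \<le> real (cnt A c m)"
      using cnt_cube_sub[OF cube_shift2[OF v(2) mL(1)]] by simp
    have l2: "\<bar>real (cnt A v (m-L)) - real (cnt A 0 (m-L))\<bar> \<le> e1 * T"
    proof -
      have "real (card (cube v (m-L) \<inter> sdf A v)) \<le> e1 * T"
        unfolding T_def k_def by (rule hB[rule_format, OF v(1) mL(2)])
      moreover have "\<bar>real (cnt A v (m-L)) - real (cnt A 0 (m-L))\<bar> \<le> real (card (cube v (m-L) \<inter> sdf A v))"
        using cnt_shift[of A 0 v "m-L"] by simp
      ultimately show ?thesis by linarith
    qed
    have l3: "real (cnt A 0 m) \<le> real (cnt A 0 (m-L)) + s - T"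
      using cnt_growth[of "m-L" m A 0] unfolding T_def s_def k_def by simp
    have r1: "S \<le> (1 + e1) * s"
    proof -
      have a: "(real(2*(m+L)+1)/real(2*m+1))^k < 1 + e1" using M1[rule_format, OF mL(4)] by (rule conjunct1)
      have b: "S / s = (real(2*(m+L)+1)/real(2*m+1))^k"
        unfolding S_def s_def of_nat_power power_divide ..
      have "S / s < 1 + e1" unfolding b by (rule a)
      then have "S < (1 + e1) * s" by (simp only: pos_divide_less_eq[OF spos])
      then show ?thesis by (rule less_imp_le)
    qed
    have r2: "(1 - e1) * s \<le> T"
    proof -
      have a: "((2*real m - 2*real L + 1)/real(2*m+1))^k > 1 - e1" using M1[rule_format, OF mL(4)] by (rule conjunct2)
      have c: "2*real m - 2*real L + 1 = real (2*(m-L)+1)" using mL(1) by (simp add: of_nat_diff)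
      have b: "T / s = (real(2*(m-L)+1)/real(2*m+1))^k"
        unfolding T_def s_def of_nat_power power_divide ..
      have "T / s > 1 - e1" unfolding b c[symmetric] by (rule a)
      then have "(1 - e1) * s < T" by (simp only: pos_less_divide_eq[OF spos])
      then show ?thesis by (rule less_imp_le)
    qed
    have up: "real (cnt A c m) - real (cnt A 0 m) \<le> 3 * e1 * s"
    proof -
      have "real (cnt A c m) - real (cnt A 0 m) \<le> S + e1 * S - s" using u1 u2 u3 by linarith
      also have "\<dots> = (1 + e1) * S - s" by (simp add: algebra_simps)
      also have "\<dots> \<le> (1 + e1) * ((1 + e1) * s) - s" using r1 e1 by (intro diff_right_mono mult_left_mono) auto
      also have "\<dots> = (2*e1 + e1*e1) * s" by (simp add: algebra_simps)
      also have "\<dots> \<le> 3 * e1 * s" using e1 spos by (intro mult_right_mono) (auto simp: mult_le_cancel_left1)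
      finally show ?thesis .
    qed
    have lo: "real (cnt A 0 m) - real (cnt A c m) \<le> 3 * e1 * s"
    proof -
      have "real (cnt A 0 m) - real (cnt A c m) \<le> s - T + e1 * T" using l1 l2 l3 by linarith
      also have "\<dots> = s - (1 - e1) * T" by (simp add: algebra_simps)
      also have "\<dots> \<le> s - (1 - e1) * ((1 - e1) * s)" using r2 e1 by (intro diff_left_mono mult_left_mono) auto
      also have "\<dots> = (2*e1 - e1*e1) * s" by (simp add: algebra_simps)
      also have "\<dots> \<le> 3 * e1 * s"
      proof (rule mult_right_mono)
        show "2*e1 - e1*e1 \<le> 3*e1" using e1 mult_nonneg_nonneg[of e1 e1] by linarith
        show "0 \<le> s" using spos by simp
      qed
      finally show ?thesis .
    qed
    have "3 * e1 * s \<le> e * s" using e1 spos by simp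
    then show ?thesis using up lo unfolding s_def k_def by linarith
  qed
  then show ?thesis by (intro exI[of _ "max M1 (M+L)"] allI impI)
qed



lemma tile_coord:
  fixes x :: int and m k :: nat
  defines "s \<equiv> 2 * int m + 1"
  assumes x: "\<bar>x\<bar> \<le> int m + int k * s"
  shows "\<bar>(x + int m) div s\<bar> \<le> int k" "\<bar>x - s * ((x + int m) div s)\<bar> \<le> int m"
proof -
  define q where "q = (x + int m) div s"
  define r where "r = (x + int m) mod s"
  have sp: "s > 0" unfolding s_def by simp
  have dm: "x + int m = s * q + r" unfolding q_def r_def by simp
  have r: "0 \<le> r" "r < s" unfolding r_def using sp by simp_all
  show "\<bar>x - s * q\<bar> \<le> int m" using dm r unfolding s_def by simp
  have "s * q < s * (int k + 1)" using dm r x unfolding s_def by (simp add: algebra_simps abs_le_iff)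
  then have q1: "q < int k + 1" using sp by (simp add: mult_less_cancel_left_pos)
  have "s * (- int k - 1) < s * q" using dm r x unfolding s_def by (simp add: algebra_simps abs_le_iff)
  then have q2: "- int k - 1 < q" using sp by (simp add: mult_less_cancel_left_pos)
  show "\<bar>q\<bar> \<le> int k" using q1 q2 by simp
qed

lemma tile_coord_uniq:
  fixes x q q' :: int and m :: nat
  assumes "\<bar>x - (2 * int m + 1) * q\<bar> \<le> int m" "\<bar>x - (2 * int m + 1) * q'\<bar> \<le> int m"
  shows "q = q'"
proof -
  have "\<bar>(2 * int m + 1) * (q - q')\<bar> \<le> 2 * int m" using assms by (simp add: algebra_simps abs_le_iff)
  then have "(2 * int m + 1) * \<bar>q - q'\<bar> \<le> 2 * int m" by (simp add: abs_mult)
  then have "(2 * int m + 1) * \<bar>q - q'\<bar> < (2 * int m + 1) * 1" by (simp only: mult_1_right)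
  then have "\<bar>q - q'\<bar> < 1" by (rule mult_left_less_imp_less) simp
  then show ?thesis by simp
qed

lemma tile_coord_back:
  fixes y q :: int and m k :: nat
  assumes "\<bar>q\<bar> \<le> int k" "\<bar>y - (2 * int m + 1) * q\<bar> \<le> int m"
  shows "\<bar>y\<bar> \<le> int m + int k * (2 * int m + 1)"
proof -
  have "\<bar>(2 * int m + 1) * q\<bar> \<le> int k * (2 * int m + 1)"
    using assms(1) by (simp add: abs_mult mult.commute mult_right_mono)
  then show ?thesis using assms(2) by linarith
qed



definition tile :: "nat \<Rightarrow> int^'n \<Rightarrow> int^'n" where
  "tile m j = (\<chi> i. (2 * int m + 1) * j$i)"

lemma tiling_cover:
  "cube (0::int^'n) (m + k*(2*m+1)) = (\<Union>j\<in>cube 0 k. cube (tile m j) m)"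
proof
  show "cube (0::int^'n) (m + k*(2*m+1)) \<subseteq> (\<Union>j\<in>cube 0 k. cube (tile m j) m)"
  proof
    fix x :: "int^'n" assume x: "x \<in> cube 0 (m + k*(2*m+1))"
    define j :: "int^'n" where "j = (\<chi> i. (x$i + int m) div (2 * int m + 1))"
    have xi: "\<bar>x$i\<bar> \<le> int m + int k * (2 * int m + 1)" for i
      using x by (simp add: cube_def algebra_simps)
    have "j \<in> cube 0 k" using tile_coord(1)[OF xi] by (simp add: cube_def j_def)
    moreover have "x \<in> cube (tile m j) m" using tile_coord(2)[OF xi] by (simp add: cube_def j_def tile_def)
    ultimately show "x \<in> (\<Union>j\<in>cube 0 k. cube (tile m j) m)" by blast
  qed
  show "(\<Union>j\<in>cube 0 k. cube (tile m j) m) \<subseteq> cube (0::int^'n) (m + k*(2*m+1))"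
  proof
    fix x :: "int^'n" assume "x \<in> (\<Union>j\<in>cube 0 k. cube (tile m j) m)"
    then obtain j where j: "j \<in> cube 0 k" "x \<in> cube (tile m j) m" by blast
    have "\<bar>x$i\<bar> \<le> int m + int k * (2 * int m + 1)" for i
      using tile_coord_back[of "j$i" k "x$i" m] j by (simp add: cube_def tile_def)
    then show "x \<in> cube (0::int^'n) (m + k*(2*m+1))" by (simp add: cube_def algebra_simps)
  qed
qed

lemma tiling_disj:
  assumes "tile m j \<noteq> tile m j'"
  shows "cube (tile m j) m \<inter> cube (tile m j') m = {}"
proof (rule ccontr)
  assume "cube (tile m j) m \<inter> cube (tile m j') m \<noteq> {}"
  then obtain x where x: "x \<in> cube (tile m j) m" "x \<in> cube (tile m j') m" by blast
  have "j$i = j'$i" for i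
    using x tile_coord_uniq[of "x$i" m "j$i" "j'$i"] by (simp add: cube_def tile_def)
  then have "j = j'" by (simp add: vec_eq_iff)
  then show False using assms by simp
qed

lemma cnt_tiling:
  fixes A :: "(int^'n) set"
  shows "cnt A 0 (m + k*(2*m+1)) = (\<Sum>j\<in>cube 0 k. cnt A (tile m j) m)"
proof -
  have inj: "inj_on (tile m) (cube (0::int^'n) k)"
  proof (rule inj_onI)
    fix j j' :: "int^'n" assume "tile m j = tile m j'"
    then have "(2 * int m + 1) * j$i = (2 * int m + 1) * j'$i" for i
      unfolding tile_def by (metis vec_lambda_beta)
    then have "j$i = j'$i" for i by (metis mult_cancel_left add_nonneg_eq_0_iff one_neq_zero zero_le_one of_nat_0_le_iff mult_nonneg_nonneg zero_le_numeral)
    then show "j = j'" by (simp add: vec_eq_iff)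
  qed
  have "A \<inter> cube 0 (m + k*(2*m+1)) = (\<Union>j\<in>cube 0 k. A \<inter> cube (tile m j) m)"
    unfolding tiling_cover by blast
  then have "cnt A 0 (m + k*(2*m+1)) = card (\<Union>j\<in>cube 0 k. A \<inter> cube (tile m j) m)"
    unfolding cnt_def by simp
  also have "\<dots> = (\<Sum>j\<in>cube 0 k. card (A \<inter> cube (tile m j) m))"
  proof (rule card_UN_disjoint)
    show "finite (cube (0::int^'n) k)" by simp
    show "\<forall>j\<in>cube 0 k. finite (A \<inter> cube (tile m j) m)" by simp
    show "\<forall>j\<in>cube 0 k. \<forall>j'\<in>cube 0 k. j \<noteq> j' \<longrightarrow>
        (A \<inter> cube (tile m j) m) \<inter> (A \<inter> cube (tile m j') m) = {}"
    proof (intro ballI impI)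
      fix j j' assume "j \<in> cube (0::int^'n) k" "j' \<in> cube 0 k" "j \<noteq> j'"
      then have "tile m j \<noteq> tile m j'" using inj by (meson inj_onD)
      then show "(A \<inter> cube (tile m j) m) \<inter> (A \<inter> cube (tile m j') m) = {}"
        using tiling_disj by blast
    qed
  qed
  finally show ?thesis unfolding cnt_def .
qed



definition g :: "(int^'n) set \<Rightarrow> nat \<Rightarrow> real" where
  "g A m = real (cnt A (0::int^'n) m) / real ((2*m+1)^CARD('n))"

lemma avg_bound:
  fixes A :: "(int^'n) set"
  assumes "\<forall>c::int^'n. \<bar>real (cnt A c m) - real (cnt A 0 m)\<bar> \<le> B"
  shows "\<bar>real (cnt A 0 (m + k*(2*m+1))) - real (card (cube (0::int^'n) k)) * real (cnt A 0 m)\<bar>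
           \<le> real (card (cube (0::int^'n) k)) * B"
proof -
  have "real (cnt A 0 (m + k*(2*m+1))) - real (card (cube (0::int^'n) k)) * real (cnt A 0 m)
      = (\<Sum>j\<in>cube (0::int^'n) k. real (cnt A (tile m j) m) - real (cnt A 0 m))"
  proof -
    have "real (cnt A 0 (m + k*(2*m+1))) = (\<Sum>j\<in>cube (0::int^'n) k. real (cnt A (tile m j) m))"
      by (simp only: cnt_tiling of_nat_sum)
    then show ?thesis by (simp add: sum_subtractf)
  qed
  also have "\<bar>\<dots>\<bar> \<le> (\<Sum>j\<in>cube (0::int^'n) k. \<bar>real (cnt A (tile m j) m) - real (cnt A 0 m)\<bar>)"
    by (rule sum_abs)
  also have "\<dots> \<le> (\<Sum>j\<in>cube (0::int^'n) k. B)"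
    using assms by (intro sum_mono) blast
  also have "\<dots> = real (card (cube (0::int^'n) k)) * B" by simp
  finally show ?thesis .
qed

lemma g_avg:
  fixes A :: "(int^'n) set"
  assumes "\<forall>c::int^'n. \<bar>real (cnt A c m) - real (cnt A 0 m)\<bar> \<le> e * real ((2*m+1)^CARD('n))"
  shows "\<bar>g A (m + k*(2*m+1)) - g A m\<bar> \<le> e"
proof -
  define D where "D = real ((2*m+1)^CARD('n))"
  define K where "K = real (card (cube (0::int^'n) k))"
  have Dp: "D > 0" unfolding D_def by simp
  have Kp: "K > 0" unfolding K_def using card_cube_pos by (simp add: card_cube)
  have big: "real ((2*(m + k*(2*m+1))+1)^CARD('n)) = K * D"
  proof -
    have e: "2*(m + k*(2*m+1))+1 = (2*k+1)*(2*m+1)" by (simp add: algebra_simps)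
    show ?thesis unfolding K_def D_def card_cube e power_mult_distrib of_nat_mult ..
  qed
  have ab: "\<bar>real (cnt A 0 (m + k*(2*m+1))) - K * real (cnt A 0 m)\<bar> \<le> K * (e * D)"
    using avg_bound[OF assms, of k] unfolding K_def D_def .
  have "g A (m + k*(2*m+1)) - g A m = (real (cnt A 0 (m + k*(2*m+1))) - K * real (cnt A 0 m)) / (K * D)"
    unfolding g_def big using Dp Kp by (simp add: field_simps D_def)
  then have "\<bar>g A (m + k*(2*m+1)) - g A m\<bar> = \<bar>real (cnt A 0 (m + k*(2*m+1))) - K * real (cnt A 0 m)\<bar> / (K * D)"
    using Dp Kp by (simp add: abs_divide)
  also have "\<dots> \<le> K * (e * D) / (K * D)"
    using ab Dp Kp by (intro divide_right_mono) auto
  also have "\<dots> = e" using Dp Kp by simp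
  finally show ?thesis .
qed

lemma ratio_aux:
  fixes x y a a' :: real
  assumes "0 \<le> x" "x \<le> a" "0 < a" "a \<le> a'" "x \<le> y" "y \<le> x + a' - a"
  shows "\<bar>y/a' - x/a\<bar> \<le> 1 - a/a'"
proof -
  have a'p: "a' > 0" using assms by linarith
  have "y/a' \<le> (x + a' - a)/a'" using assms a'p by (intro divide_right_mono) auto
  also have "\<dots> = x/a' + 1 - a/a'" using a'p by (simp add: field_simps)
  finally have 1: "y/a' \<le> x/a' + 1 - a/a'" .
  have "x/a' \<le> x/a" using assms by (intro divide_left_mono) auto
  with 1 have up: "y/a' - x/a \<le> 1 - a/a'" by linarith
  have "x/a' \<le> y/a'" using assms a'p by (intro divide_right_mono) auto
  moreover have "x/a - x/a' = x*(a'-a)/(a*a')" using a'p assms by (simp add: field_simps)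
  moreover have "x*(a'-a)/(a*a') \<le> a*(a'-a)/(a*a')"
    using assms a'p by (intro divide_right_mono mult_right_mono) auto
  moreover have "a*(a'-a)/(a*a') = 1 - a/a'" using a'p assms by (simp add: field_simps)
  ultimately have lo: "x/a - y/a' \<le> 1 - a/a'" by linarith
  show ?thesis using up lo by linarith
qed

lemma g_growth:
  fixes A :: "(int^'n) set"
  assumes "P \<le> M'"
  shows "\<bar>g A M' - g A P\<bar> \<le> 1 - (real (2*P+1) / real (2*M'+1))^CARD('n)"
proof -
  have "\<bar>g A M' - g A P\<bar> \<le> 1 - real ((2*P+1)^CARD('n)) / real ((2*M'+1)^CARD('n))"
    unfolding g_def
  proof (rule ratio_aux)
    show "0 \<le> real (cnt A 0 P)" by simp
    show "real (cnt A 0 P) \<le> real ((2*P+1)^CARD('n))"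
      using cnt_le_card[of A 0 P] unfolding card_cube by (simp only: of_nat_le_iff)
    show "0 < real ((2*P+1)^CARD('n))" by simp
    show "real ((2*P+1)^CARD('n)) \<le> real ((2*M'+1)^CARD('n))"
      using assms by (simp add: power_mono)
    show "real (cnt A 0 P) \<le> real (cnt A 0 M')" using cnt_mono[OF assms] by simp
    show "real (cnt A 0 M') \<le> real (cnt A 0 P) + real ((2*M'+1)^CARD('n)) - real ((2*P+1)^CARD('n))"
      by (rule cnt_growth[OF assms])
  qed
  then show ?thesis by (simp add: power_divide)
qed



lemma lim_ratio3: "(\<lambda>Mx::nat. ((2*real Mx + 1 - 2*real s)/real(2*Mx+1))^k) \<longlonglongrightarrow> 1"
proof -
  have "(\<lambda>Mx::nat. (2*real Mx + 1 - 2*real s)/real(2*Mx+1)) \<longlonglongrightarrow> 1" by real_asymp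
  then have "(\<lambda>Mx::nat. ((2*real Mx + 1 - 2*real s)/real(2*Mx+1))^k) \<longlonglongrightarrow> 1^k" by (rule tendsto_power)
  then show ?thesis by simp
qed

lemma g_convergent:
  fixes A :: "(int^'n) set"
  assumes ap: "almost_per A"
  shows "convergent (g A)"
proof -
  have "Cauchy (g A)"
  proof (rule CauchyI)
    fix e :: real assume e: "0 < e"
    obtain M0 where M0: "\<forall>m\<ge>M0. \<forall>c::int^'n. \<bar>real (cnt A c m) - real (cnt A 0 m)\<bar> \<le> (e/4) * real ((2*m+1)^CARD('n))"
      using uniform[OF ap, of "e/4"] e by auto
    define s where "s = 2*M0+1"
    have ev: "eventually (\<lambda>Mx. ((2*real Mx + 1 - 2*real s)/real(2*Mx+1))^CARD('n) > 1 - e/4) sequentially"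
      by (rule order_tendstoD(1)[OF lim_ratio3]) (use e in simp)
    then obtain M2 where M2: "\<forall>Mx\<ge>M2. ((2*real Mx + 1 - 2*real s)/real(2*Mx+1))^CARD('n) > 1 - e/4"
      unfolding eventually_sequentially by blast
    have close: "\<bar>g A Mx - g A M0\<bar> < e/2" if Mx: "Mx \<ge> max M2 (M0 + s)" for Mx
    proof -
      define k where "k = (Mx - M0) div s"
      define Pq where "Pq = M0 + k * s"
      have sp: "s > 0" unfolding s_def by simp
      have dm: "k * s + (Mx - M0) mod s = Mx - M0" unfolding k_def by (rule div_mult_mod_eq)
      have "(Mx - M0) mod s < s" using sp by simp
      then have PM: "Pq \<le> Mx" "Mx < Pq + s" using dm Mx unfolding Pq_def by auto
      have a1: "\<bar>g A Pq - g A M0\<bar> \<le> e/4"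
        unfolding Pq_def s_def by (rule g_avg) (use M0 in blast)
      have a2: "\<bar>g A Mx - g A Pq\<bar> \<le> 1 - (real (2*Pq+1) / real (2*Mx+1))^CARD('n)"
        by (rule g_growth[OF PM(1)])
      have a3: "((2*real Mx + 1 - 2*real s)/real(2*Mx+1))^CARD('n) \<le> (real (2*Pq+1) / real (2*Mx+1))^CARD('n)"
      proof (rule power_mono)
        have "real Mx \<ge> real s" using Mx by simp
        then show "0 \<le> (2*real Mx + 1 - 2*real s)/real(2*Mx+1)" by simp
        have "2*real Mx + 1 - 2*real s \<le> real (2*Pq+1)" using PM(2) by simp
        then show "(2*real Mx + 1 - 2*real s)/real(2*Mx+1) \<le> real (2*Pq+1) / real (2*Mx+1)"
          by (rule divide_right_mono) simp
      qed
      have a4: "((2*real Mx + 1 - 2*real s)/real(2*Mx+1))^CARD('n) > 1 - e/4" using M2 Mx by simp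
      show ?thesis using a1 a2 a3 a4 by linarith
    qed
    show "\<exists>M. \<forall>m\<ge>M. \<forall>n\<ge>M. norm (g A m - g A n) < e"
    proof (intro exI allI impI)
      fix m n assume "max M2 (M0 + s) \<le> m" "max M2 (M0 + s) \<le> n"
      then have "\<bar>g A m - g A M0\<bar> < e/2" "\<bar>g A n - g A M0\<bar> < e/2" using close by auto
      then show "norm (g A m - g A n) < e" unfolding real_norm_def by linarith
    qed
  qed
  then show ?thesis by (simp add: Cauchy_convergent_iff)
qed



lemma density_lim:
  fixes A :: "(int^'n) set"
  assumes lim: "g A \<longlonglongrightarrow> l"
  shows "density A = l"
proof -
  have filt: "filterlim (\<lambda>R::real. nat (\<lceil>R\<rceil> - 1)) sequentially at_top"
    unfolding filterlim_at_top eventually_at_top_linorder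
  proof
    fix Z :: nat
    show "\<exists>N::real. \<forall>R\<ge>N. Z \<le> nat (\<lceil>R\<rceil> - 1)"
    proof (intro exI allI impI)
      fix R :: real assume "real Z + 1 \<le> R"
      then have "real_of_int (int Z + 1) \<le> R" by simp
      then have "int Z + 1 \<le> \<lceil>R\<rceil>" by (simp add: le_ceiling_iff)
      then show "Z \<le> nat (\<lceil>R\<rceil> - 1)" by linarith
    qed
  qed
  have l2: "((\<lambda>R::real. g A (nat (\<lceil>R\<rceil> - 1))) \<longlongrightarrow> l) at_top"
    using filterlim_compose[OF lim filt] by simp
  have ev: "eventually (\<lambda>R. g A (nat (\<lceil>R\<rceil> - 1)) =
      real (card (A \<inter> lat_ball 0 R)) / real (card (lat_ball (0::real^'n) R))) at_top"
    unfolding eventually_at_top_linorder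
  proof (intro exI allI impI)
    fix R :: real assume "1 \<le> R"
    then have "lat_ball (0::real^'n) R = cube 0 (nat (\<lceil>R\<rceil> - 1))" by (intro lat_ball0_cube) simp
    then show "g A (nat (\<lceil>R\<rceil> - 1)) =
      real (card (A \<inter> lat_ball 0 R)) / real (card (lat_ball (0::real^'n) R))"
      by (simp add: g_def cnt_def card_cube)
  qed
  have "((\<lambda>R. real (card (A \<inter> lat_ball 0 R)) / real (card (lat_ball (0::real^'n) R))) \<longlongrightarrow> l) at_top"
    using l2 tendsto_cong[OF ev] by simp
  then show ?thesis unfolding density_def by (intro tendsto_Lim) simp_all
qed

lemma rel_dense_int:
  assumes "rel_dense (N :: (int^'n) set)"
  shows "\<exists>L::nat. \<forall>c::int^'n. \<exists>v\<in>N. \<forall>i. \<bar>c$i - v$i\<bar> \<le> int L"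
proof -
  obtain R0 where R0: "R0 > 0" "\<forall>(x::real^'n) R. R \<ge> R0 \<longrightarrow> lat_ball x R \<inter> N \<noteq> {}"
    using assms unfolding rel_dense_def by blast
  have "\<exists>v\<in>N. \<forall>i. \<bar>c$i - v$i\<bar> \<le> int (nat \<lceil>R0\<rceil>)" for c :: "int^'n"
  proof -
    obtain v where v: "v \<in> lat_ball (lat_emb c) R0" "v \<in> N" using R0(2) by blast
    have "\<bar>c$i - v$i\<bar> \<le> int (nat \<lceil>R0\<rceil>)" for i
    proof -
      have "\<bar>real_of_int (c$i) - real_of_int (v$i)\<bar> < R0" using v(1) by (simp add: lat_ball_iff lat_emb_def)
      then have "real_of_int \<bar>c$i - v$i\<bar> < R0" by simp
      then have "\<bar>c$i - v$i\<bar> < \<lceil>R0\<rceil>" by (simp add: less_ceiling_iff)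
      then show ?thesis by linarith
    qed
    then show ?thesis using v(2) by blast
  qed
  then show ?thesis by blast
qed

lemma rel_dense_mono: "rel_dense N \<Longrightarrow> N \<subseteq> T \<Longrightarrow> rel_dense T"
  unfolding rel_dense_def by blast

lemma ud_count:
  fixes S :: "(int^'n) set"
  assumes "upper_density (real m + 1) S < e"
  shows "real (card (cube c m \<inter> S)) \<le> e * real ((2*m+1)^CARD('n))"
proof -
  let ?f = "\<lambda>x::real^'n. real (card (lat_ball x (real m + 1) \<inter> S)) / real (card (lat_ball x (real m + 1)))"
  have bdd: "bdd_above (range ?f)"
  proof (rule bdd_aboveI2)
    fix x :: "real^'n"
    have "card (lat_ball x (real m + 1) \<inter> S) \<le> card (lat_ball x (real m + 1))"
      by (rule card_mono[OF finite_lat_ball]) auto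
    then show "?f x \<le> 1" by (auto simp: divide_le_eq_1)
  qed
  have "?f (lat_emb c) \<le> upper_density (real m + 1) S"
    unfolding upper_density_def by (rule cSUP_upper[OF UNIV_I bdd])
  then have "?f (lat_emb c) < e" using assms by linarith
  then have "real (card (cube c m \<inter> S)) / real ((2*m+1)^CARD('n)) < e"
    by (simp add: lat_ball_cube card_cube)
  then show ?thesis by (simp add: divide_less_eq less_imp_le)
qed

lemma app_count:
  fixes \<Gamma> :: "(int^'n) set"
  assumes "almost_periodic_pattern \<Gamma>" "e > 0"
  shows "\<exists>M N. rel_dense N \<and> (\<forall>v\<in>N. \<forall>m\<ge>M. \<forall>c::int^'n.
            real (card (cube c m \<inter> sdf \<Gamma> v)) \<le> e * real ((2*m+1)^CARD('n)))"
proof -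
  obtain R N where RN: "R > 0" "rel_dense N"
    "\<forall>R'\<ge>R. \<forall>v\<in>N. upper_density R' ((translate \<Gamma> v - \<Gamma>) \<union> (\<Gamma> - translate \<Gamma> v)) < e"
    using assms unfolding almost_periodic_pattern_def by blast
  have "\<forall>v\<in>N. \<forall>m\<ge>nat \<lceil>R\<rceil>. \<forall>c::int^'n. real (card (cube c m \<inter> sdf \<Gamma> v)) \<le> e * real ((2*m+1)^CARD('n))"
  proof (intro ballI allI impI)
    fix v m and c :: "int^'n" assume v: "v \<in> N" and m: "nat \<lceil>R\<rceil> \<le> m"
    have "R \<le> real m + 1" using m by linarith
    then have "upper_density (real m + 1) (sdf \<Gamma> v) < e" using RN(3) v unfolding sdf_def by blast
    then show "real (card (cube c m \<inter> sdf \<Gamma> v)) \<le> e * real ((2*m+1)^CARD('n))" by (rule ud_count)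
  qed
  then show ?thesis using RN(2) by blast
qed

lemma app_almost_per:
  fixes \<Gamma> :: "(int^'n) set"
  assumes "almost_periodic_pattern \<Gamma>"
  shows "almost_per \<Gamma>"
  unfolding almost_per_def
proof (intro allI impI)
  fix e :: real assume "e > 0"
  then obtain M N where MN: "rel_dense N" "\<forall>v\<in>N. \<forall>m\<ge>M. \<forall>c::int^'n.
            real (card (cube c m \<inter> sdf \<Gamma> v)) \<le> e * real ((2*m+1)^CARD('n))"
    using app_count[OF assms] by blast
  obtain L where "\<forall>c::int^'n. \<exists>v\<in>N. \<forall>i. \<bar>c$i - v$i\<bar> \<le> int L" using rel_dense_int[OF MN(1)] by blast
  then show "\<exists>M L N. (\<forall>c::int^'n. \<exists>v\<in>N. \<forall>i. \<bar>c$i - v$i\<bar> \<le> int L) \<and>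
     (\<forall>v\<in>N. \<forall>m\<ge>M. \<forall>c::int^'n. real (card (cube c m \<inter> sdf \<Gamma> v)) \<le> e * real ((2*m+1)^CARD('n)))"
    using MN(2) by blast
qed



lemma mem_translate: "x \<in> translate S w \<longleftrightarrow> x - w \<in> S"
proof
  assume "x \<in> translate S w"
  then obtain y where "y \<in> S" "x = y + w" unfolding translate_def by blast
  then show "x - w \<in> S" by simp
next
  assume "x - w \<in> S"
  moreover have "x = (x - w) + w" by simp
  ultimately show "x \<in> translate S w" unfolding translate_def by (rule rev_image_eqI)
qed

lemma sdf_Au: "sdf (\<Gamma> \<inter> translate \<Gamma> w) v \<subseteq> sdf \<Gamma> v \<union> translate (sdf \<Gamma> v) w"
  by (auto simp: sdf_def mem_translate algebra_simps)

lemma sym_inc: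
  "((\<Gamma> \<inter> translate \<Gamma> (-(u+v))) - (\<Gamma> \<inter> translate \<Gamma> (-u))) \<union>
   ((\<Gamma> \<inter> translate \<Gamma> (-u)) - (\<Gamma> \<inter> translate \<Gamma> (-(u+v)))) \<subseteq> translate (sdf \<Gamma> v) (-(u+v))"
  by (auto simp: sdf_def mem_translate algebra_simps)



lemma card_Int_Un_le: "finite Q \<Longrightarrow> card (Q \<inter> (X \<union> Y)) \<le> card (Q \<inter> X) + card (Q \<inter> Y)"
proof -
  assume "finite Q"
  have "Q \<inter> (X \<union> Y) = (Q \<inter> X) \<union> (Q \<inter> Y)" by blast
  then show ?thesis by (simp add: card_Un_le)
qed

lemma Au_almost_per:
  fixes \<Gamma> :: "(int^'n) set"
  assumes ap: "almost_periodic_pattern \<Gamma>"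
  shows "almost_per (\<Gamma> \<inter> translate \<Gamma> w)"
  unfolding almost_per_def
proof (intro allI impI)
  fix e :: real assume e: "e > 0"
  then obtain M N where MN: "rel_dense N" "\<forall>v\<in>N. \<forall>m\<ge>M. \<forall>c::int^'n.
            real (card (cube c m \<inter> sdf \<Gamma> v)) \<le> (e/2) * real ((2*m+1)^CARD('n))"
    using app_count[OF ap, of "e/2"] by auto
  obtain L where L: "\<forall>c::int^'n. \<exists>v\<in>N. \<forall>i. \<bar>c$i - v$i\<bar> \<le> int L" using rel_dense_int[OF MN(1)] by blast
  have "\<forall>v\<in>N. \<forall>m\<ge>M. \<forall>c::int^'n. real (card (cube c m \<inter> sdf (\<Gamma> \<inter> translate \<Gamma> w) v)) \<le> e * real ((2*m+1)^CARD('n))"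
  proof (intro ballI allI impI)
    fix v m and c :: "int^'n" assume v: "v \<in> N" and m: "M \<le> m"
    have "card (cube c m \<inter> sdf (\<Gamma> \<inter> translate \<Gamma> w) v) \<le> card (cube c m \<inter> (sdf \<Gamma> v \<union> translate (sdf \<Gamma> v) w))"
      using sdf_Au[of \<Gamma> w v] by (intro card_mono) auto
    also have "\<dots> \<le> card (cube c m \<inter> sdf \<Gamma> v) + card (cube c m \<inter> translate (sdf \<Gamma> v) w)"
      by (rule card_Int_Un_le) simp
    also have "card (cube c m \<inter> translate (sdf \<Gamma> v) w) = card (cube (c - w) m \<inter> sdf \<Gamma> v)"
      by (rule card_int_translate)
    finally have "real (card (cube c m \<inter> sdf (\<Gamma> \<inter> translate \<Gamma> w) v)) \<le>
        real (card (cube c m \<inter> sdf \<Gamma> v)) + real (card (cube (c - w) m \<inter> sdf \<Gamma> v))"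
      by (metis of_nat_add of_nat_le_iff)
    moreover have "real (card (cube c m \<inter> sdf \<Gamma> v)) \<le> (e/2) * real ((2*m+1)^CARD('n))"
      using MN(2) v m by blast
    moreover have "real (card (cube (c - w) m \<inter> sdf \<Gamma> v)) \<le> (e/2) * real ((2*m+1)^CARD('n))"
      using MN(2) v m by blast
    ultimately show "real (card (cube c m \<inter> sdf (\<Gamma> \<inter> translate \<Gamma> w) v)) \<le> e * real ((2*m+1)^CARD('n))"
      by linarith
  qed
  then show "\<exists>M L N. (\<forall>c::int^'n. \<exists>v\<in>N. \<forall>i. \<bar>c$i - v$i\<bar> \<le> int L) \<and>
     (\<forall>v\<in>N. \<forall>m\<ge>M. \<forall>c::int^'n. real (card (cube c m \<inter> sdf (\<Gamma> \<inter> translate \<Gamma> w) v)) \<le> e * real ((2*m+1)^CARD('n)))"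
    using L by blast
qed

lemma density_exists:
  fixes \<Gamma> :: "(int^'n) set"
  assumes ap: "almost_periodic_pattern \<Gamma>"
  shows "g (\<Gamma> \<inter> translate \<Gamma> w) \<longlonglongrightarrow> density (\<Gamma> \<inter> translate \<Gamma> w)"
proof -
  obtain l where l: "g (\<Gamma> \<inter> translate \<Gamma> w) \<longlonglongrightarrow> l"
    using g_convergent[OF Au_almost_per[OF ap]] unfolding convergent_def by blast
  then show ?thesis using density_lim[OF l] by simp
qed

lemma translate_0: "translate S 0 = S"
  unfolding translate_def by simp

lemma density_pos:
  fixes \<Gamma> :: "(int^'n) set"
  assumes ap: "almost_periodic_pattern \<Gamma>"
  shows "\<exists>b>0. b \<le> density \<Gamma>"
proof -
  have lim: "g \<Gamma> \<longlonglongrightarrow> density \<Gamma>"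
    using density_exists[OF ap, of 0] by (simp add: translate_0)
  have "rel_dense \<Gamma>" using ap unfolding almost_periodic_pattern_def delone_def by blast
  then obtain L where L: "\<forall>c::int^'n. \<exists>v\<in>\<Gamma>. \<forall>i. \<bar>c$i - v$i\<bar> \<le> int L" using rel_dense_int by blast
  have one: "1 \<le> cnt \<Gamma> c L" for c :: "int^'n"
  proof -
    obtain v where v: "v \<in> \<Gamma>" "\<forall>i. \<bar>c$i - v$i\<bar> \<le> int L" using L by blast
    have "v \<in> cube c L" using v(2) by (simp add: cube_def abs_minus_commute)
    then have "\<Gamma> \<inter> cube c L \<noteq> {}" using v(1) by blast
    then have "card (\<Gamma> \<inter> cube c L) > 0" by (simp add: card_gt_0_iff)
    then show ?thesis unfolding cnt_def by simp
  qed
  define b where "b = 1 / real ((2*L+1)^CARD('n))"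
  have bpos: "b > 0" unfolding b_def by simp
  define f where "f k = L + k*(2*L+1)" for k
  have sm: "strict_mono f"
  proof (rule strict_monoI)
    fix x y :: nat assume "x < y"
    then have "x*(2*L+1) < y*(2*L+1)" by (rule mult_strict_right_mono) simp
    then show "f x < f y" unfolding f_def by linarith
  qed
  have gf: "b \<le> g \<Gamma> (f k)" for k
  proof -
    define K where "K = card (cube (0::int^'n) k)"
    have "K \<le> cnt \<Gamma> 0 (f k)"
    proof -
      have "K = (\<Sum>j\<in>cube (0::int^'n) k. 1)" unfolding K_def by simp
      also have "\<dots> \<le> (\<Sum>j\<in>cube (0::int^'n) k. cnt \<Gamma> (tile L j) L)" by (intro sum_mono one)
      also have "\<dots> = cnt \<Gamma> 0 (f k)" unfolding f_def by (rule cnt_tiling[symmetric])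
      finally show ?thesis .
    qed
    then have c1: "real K \<le> real (cnt \<Gamma> 0 (f k))" by simp
    have e: "2*(L + k*(2*L+1))+1 = (2*k+1)*(2*L+1)" by (simp add: algebra_simps)
    have D: "real ((2*f k+1)^CARD('n)) = real K * real ((2*L+1)^CARD('n))"
      unfolding f_def K_def card_cube e power_mult_distrib of_nat_mult ..
    have Kp: "real K > 0" unfolding K_def by (simp add: card_cube)
    have "b = real K / (real K * real ((2*L+1)^CARD('n)))" unfolding b_def using Kp by simp
    also have "\<dots> \<le> real (cnt \<Gamma> 0 (f k)) / (real K * real ((2*L+1)^CARD('n)))"
      using c1 Kp by (intro divide_right_mono) auto
    also have "\<dots> = g \<Gamma> (f k)" unfolding g_def D[symmetric] ..
    finally show ?thesis .
  qed
  have "(g \<Gamma> \<circ> f) \<longlonglongrightarrow> density \<Gamma>" by (rule LIMSEQ_subseq_LIMSEQ[OF lim sm])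
  then have "b \<le> density \<Gamma>"
    by (rule tendsto_lowerbound) (use gf in \<open>simp_all add: o_def\<close>)
  then show ?thesis using bpos by blast
qed



lemma rho_diff:
  fixes \<Gamma> :: "(int^'n) set"
  assumes ap: "almost_periodic_pattern \<Gamma>"
    and MN: "\<forall>m\<ge>M. \<forall>c::int^'n. real (card (cube c m \<inter> sdf \<Gamma> v)) \<le> \<delta> * real ((2*m+1)^CARD('n))"
  shows "\<bar>density (\<Gamma> \<inter> translate \<Gamma> (-u)) - density (\<Gamma> \<inter> translate \<Gamma> (-(u+v)))\<bar> \<le> \<delta>"
proof -
  define A1 where "A1 = \<Gamma> \<inter> translate \<Gamma> (-u)"
  define A2 where "A2 = \<Gamma> \<inter> translate \<Gamma> (-(u+v))"
  have l1: "g A1 \<longlonglongrightarrow> density A1" unfolding A1_def by (rule density_exists[OF ap])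
  have l2: "g A2 \<longlonglongrightarrow> density A2" unfolding A2_def by (rule density_exists[OF ap])
  have lim: "(\<lambda>m. \<bar>g A1 m - g A2 m\<bar>) \<longlonglongrightarrow> \<bar>density A1 - density A2\<bar>"
    by (intro tendsto_rabs tendsto_diff l1 l2)
  have bound: "\<bar>g A1 m - g A2 m\<bar> \<le> \<delta>" if m: "m \<ge> M" for m
  proof -
    define Q where "Q = cube (0::int^'n) m"
    define X where "X = (A2 - A1) \<union> (A1 - A2)"
    have fQ: "finite Q" unfolding Q_def by simp
    have c1: "card (A1 \<inter> Q) \<le> card (A2 \<inter> Q) + card (Q \<inter> X)"
      unfolding X_def by (rule card_symdiff_le[OF fQ])
    have c2: "card (A2 \<inter> Q) \<le> card (A1 \<inter> Q) + card (Q \<inter> X)"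
      unfolding X_def using card_symdiff_le[OF fQ, of A2 A1] by (simp add: Un_commute)
    have "card (Q \<inter> X) \<le> card (Q \<inter> translate (sdf \<Gamma> v) (-(u+v)))"
      using sym_inc[of \<Gamma> u v] unfolding X_def A1_def A2_def Q_def by (intro card_mono) auto
    also have "\<dots> = card (cube (u+v) m \<inter> sdf \<Gamma> v)"
      unfolding Q_def card_int_translate by (simp add: add.commute)
    finally have c3: "real (card (Q \<inter> X)) \<le> \<delta> * real ((2*m+1)^CARD('n))"
      using MN m by (meson of_nat_le_iff order_trans)
    have D: "real ((2*m+1)^CARD('n)) > 0" by simp
    have "\<bar>real (cnt A1 0 m) - real (cnt A2 0 m)\<bar> \<le> \<delta> * real ((2*m+1)^CARD('n))"
    proof -
      have a: "real (card (A1 \<inter> Q)) \<le> real (card (A2 \<inter> Q)) + real (card (Q \<inter> X))"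
        using c1 by (metis of_nat_add of_nat_le_iff)
      have b: "real (card (A2 \<inter> Q)) \<le> real (card (A1 \<inter> Q)) + real (card (Q \<inter> X))"
        using c2 by (metis of_nat_add of_nat_le_iff)
      show ?thesis using a b c3 unfolding cnt_def Q_def by linarith
    qed
    then have "\<bar>real (cnt A1 0 m) - real (cnt A2 0 m)\<bar> / real ((2*m+1)^CARD('n)) \<le> \<delta>"
      using D by (simp add: divide_le_eq)
    moreover have "g A1 m - g A2 m = (real (cnt A1 0 m) - real (cnt A2 0 m)) / real ((2*m+1)^CARD('n))"
      unfolding g_def by (simp add: diff_divide_distrib)
    ultimately show ?thesis using D by (simp add: abs_divide)
  qed
  have "\<bar>density A1 - density A2\<bar> \<le> \<delta>"
    by (rule tendsto_upperbound[OF lim]) (use bound in \<open>auto simp: eventually_sequentially\<close>)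
  then show ?thesis unfolding A1_def A2_def .
qed

theorem lemma2p7:
  fixes \<Gamma> :: "(int^'n) set"
  assumes "almost_periodic_pattern \<Gamma>"
  shows "\<forall>\<epsilon>>0. rel_dense {v::int^'n. \<exists>c<\<epsilon>. \<forall>u. \<bar>rho \<Gamma> u - rho \<Gamma> (u + v)\<bar> \<le> c}"
proof (intro allI impI)
  fix \<epsilon> :: real assume eps: "\<epsilon> > 0"
  obtain b where b: "b > 0" "b \<le> density \<Gamma>" using density_pos[OF assms] by blast
  define d where "d = density \<Gamma>"
  have dpos: "d > 0" using b unfolding d_def by linarith
  define \<delta> where "\<delta> = \<epsilon> * b / 2"
  have dl: "\<delta> > 0" unfolding \<delta>_def using eps b by simp
  obtain M N where MN: "rel_dense N" "\<forall>v\<in>N. \<forall>m\<ge>M. \<forall>c::int^'n.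
            real (card (cube c m \<inter> sdf \<Gamma> v)) \<le> \<delta> * real ((2*m+1)^CARD('n))"
    using app_count[OF assms dl] by blast
  have "N \<subseteq> {v::int^'n. \<exists>c<\<epsilon>. \<forall>u. \<bar>rho \<Gamma> u - rho \<Gamma> (u + v)\<bar> \<le> c}"
  proof
    fix v assume v: "v \<in> N"
    have lt: "\<delta> / d < \<epsilon>"
    proof -
      have "\<delta> / d \<le> \<delta> / b" using b dl unfolding d_def by (intro divide_left_mono) auto
      also have "\<delta> / b = \<epsilon> / 2" unfolding \<delta>_def using b by simp
      finally show ?thesis using eps by linarith
    qed
    have "\<bar>rho \<Gamma> u - rho \<Gamma> (u + v)\<bar> \<le> \<delta> / d" for u
    proof -
      have "\<bar>density (\<Gamma> \<inter> translate \<Gamma> (-u)) - density (\<Gamma> \<inter> translate \<Gamma> (-(u+v)))\<bar> \<le> \<delta>"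
        using rho_diff[OF assms] MN(2) v by blast
      then have "\<bar>density (\<Gamma> \<inter> translate \<Gamma> (-u)) - density (\<Gamma> \<inter> translate \<Gamma> (-(u+v)))\<bar> / d \<le> \<delta> / d"
        using dpos by (intro divide_right_mono) auto
      moreover have "rho \<Gamma> u - rho \<Gamma> (u + v) =
          (density (\<Gamma> \<inter> translate \<Gamma> (-u)) - density (\<Gamma> \<inter> translate \<Gamma> (-(u+v)))) / d"
        unfolding rho_def d_def by (simp add: diff_divide_distrib)
      ultimately show ?thesis using dpos by (simp add: abs_divide)
    qed
    then show "v \<in> {v::int^'n. \<exists>c<\<epsilon>. \<forall>u. \<bar>rho \<Gamma> u - rho \<Gamma> (u + v)\<bar> \<le> c}"
      using lt by blast
  qed
  then show "rel_dense {v::int^'n. \<exists>c<\<epsilon>. \<forall>u. \<bar>rho \<Gamma> u - rho \<Gamma> (u + v)\<bar> \<le> c}"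
    by (rule rel_dense_mono[OF MN(1)])
qed

end
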